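(* If $k\ge4$, then in the setting of the context, $0<\lim_{p\to\infty}\gamma_p(k)\le 3$.
   Context: For integers $k\ge2$, $n\ge1$ and $x\in\mathbb R$: $P_{n,k}(x)=\left(1+\frac{x^{n-1}}{2}\right)^{k+1}-\left(1-\frac{x^{n-1}}{2}\right)^{k+1}$, and for $n>k$: $Q_{n,k}(x)=(k+1)x^{n-k}$. Fix an integer $k\ge2$ and, for each integer $n>k$, an arbitrary $\xi(k;n)\in(0,1)$ with $P_{n,k}(\xi(k;n))=Q_{n,k}(\xi(k;n))$. Let $\alpha=\limsup_{n\to\infty}\xi(k;n)^{n-1}$ and let $(n_p)_{p\in\mathbb N}$ be a strictly increasing sequence of integers $>k$ with $\xi(k;n_p)^{n_p-1}\to\alpha$. For $n>k$ put $$C_n(k)=\frac{\xi(k;n)^{3n-k-2}}{\frac{1}{k+2}\left[\left(1+\frac{\xi(k;n)^{n-1}}{2}\right)^{k+2}-\left(1-\frac{\xi(k;n)^{n-1}}{2}\right)^{k+2}\right]-\xi(k;n)^{n-k}},$$ and $\gamma_p(k)=C_{n_p}(k)$ for $p\in\mathbb N$. *)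

theory Defs
  imports "HOL-Analysis.Analysis"
begin

definition P_poly :: "nat \<Rightarrow> nat \<Rightarrow> real \<Rightarrow> real" where
  "P_poly n k x = (1 + x ^ (n - 1) / 2) ^ (k + 1) - (1 - x ^ (n - 1) / 2) ^ (k + 1)"

definition Q_poly :: "nat \<Rightarrow> nat \<Rightarrow> real \<Rightarrow> real" where
  "Q_poly n k x = real (k + 1) * x ^ (n - k)"

definition C_const :: "nat \<Rightarrow> nat \<Rightarrow> real \<Rightarrow> real" where
  "C_const n k xi = xi ^ (3 * n - k - 2) /
     ((1 / real (k + 2)) * ((1 + xi ^ (n - 1) / 2) ^ (k + 2) - (1 - xi ^ (n - 1) / 2) ^ (k + 2))
      - xi ^ (n - k))"

end

theory Submission imports Defs begin

definition FF :: "nat \<Rightarrow> real \<Rightarrow> real" where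
  "FF m t = (1 + t) ^ m - (1 - t) ^ m"

lemma FF_deriv: "DERIV (FF m) x :> real m * (1 + x) ^ (m - 1) + real m * (1 - x) ^ (m - 1)"
  unfolding FF_def by (auto intro!: derivative_eq_intros)

lemma FF_lim: "((\<lambda>t. FF m t / t) \<longlongrightarrow> 2 * real m) (at 0)"
proof -
  have "((\<lambda>h. (FF m (0 + h) - FF m 0) / h) \<longlongrightarrow> real m * (1 + 0) ^ (m - 1) + real m * (1 - 0) ^ (m - 1)) (at 0)"
    by (rule DERIV_D[OF FF_deriv])
  then show ?thesis by (simp add: FF_def)
qed

definition NN :: "nat \<Rightarrow> real \<Rightarrow> real" where
  "NN k t = real (k+1) / real (k+2) * FF (k+2) t - FF (k+1) t"

lemma NN_deriv: "DERIV (NN k) x :> real (k+1) * x * FF k x"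
proof -
  have "DERIV (NN k) x :> real (k+1) / real (k+2) * (real (k+2) * (1 + x) ^ (k+1) + real (k+2) * (1 - x) ^ (k+1))
      - (real (k+1) * (1 + x) ^ k + real (k+1) * (1 - x) ^ k)"
    unfolding NN_def using FF_deriv[of "k+2" x] FF_deriv[of "k+1" x]
    by (auto intro!: derivative_eq_intros)
  moreover have "real (k+1) / real (k+2) * (real (k+2) * (1 + x) ^ (k+1) + real (k+2) * (1 - x) ^ (k+1))
      - (real (k+1) * (1 + x) ^ k + real (k+1) * (1 - x) ^ k) = real (k+1) * x * FF k x"
    unfolding FF_def by (simp add: field_simps)
  ultimately show ?thesis by simp
qed

lemma NN_lim: "((\<lambda>t. NN k t / t ^ 3) \<longlongrightarrow> 2 * real k * real (k+1) / 3) (at_right 0)"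
proof (rule lhopital_right_0)
  show "(NN k \<longlongrightarrow> 0) (at_right 0)"
  proof -
    have "isCont (NN k) 0" using NN_deriv DERIV_isCont by blast
    then have "(NN k \<longlongrightarrow> NN k 0) (at 0)" by (simp add: isCont_def)
    then show ?thesis by (auto simp: NN_def FF_def intro: tendsto_mono[OF at_within_le_at])
  qed
  show "((\<lambda>t::real. t ^ 3) \<longlongrightarrow> 0) (at_right 0)"
    by (auto intro!: tendsto_eq_intros)
  show "eventually (\<lambda>x::real. x ^ 3 \<noteq> 0) (at_right 0)"
    by (auto simp: eventually_at_right_field intro!: exI[of _ 1])
  show "eventually (\<lambda>x::real. 3 * x^2 \<noteq> 0) (at_right 0)"
    by (auto simp: eventually_at_right_field intro!: exI[of _ 1])
  show "eventually (\<lambda>x. DERIV (NN k) x :> real (k+1) * x * FF k x) (at_right 0)"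
    using NN_deriv by (intro always_eventually) blast
  show "eventually (\<lambda>x. DERIV (\<lambda>t. t^3) x :> 3 * x^2) (at_right 0)"
    by (auto intro!: derivative_eq_intros always_eventually)
  have "((\<lambda>t. real (k+1) / 3 * (FF k t / t)) \<longlongrightarrow> real (k+1) / 3 * (2 * real k)) (at_right 0)"
    by (intro tendsto_intros tendsto_mono[OF at_within_le_at FF_lim])
  moreover have "eventually (\<lambda>t. real (k+1) / 3 * (FF k t / t) = real (k + 1) * t * FF k t / (3 * t\<^sup>2)) (at_right 0)"
    by (auto simp: eventually_at_right_field power2_eq_square intro!: exI[of _ 1])
  ultimately show "((\<lambda>t. real (k + 1) * t * FF k t / (3 * t\<^sup>2)) \<longlongrightarrow> 2 * real k * real (k+1) / 3) (at_right 0)"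
    by (simp add: tendsto_cong mult.commute mult.left_commute)
qed

lemma G_lim:
  assumes "k \<ge> 1"
  shows "((\<lambda>t. 4 * t^2 * FF (k+1) t / NN k t) \<longlongrightarrow> 12 / real k) (at_right 0)"
proof -
  have "((\<lambda>t. 4 * (FF (k+1) t / t) / (NN k t / t^3)) \<longlongrightarrow> 4 * (2 * real (k+1)) / (2 * real k * real (k+1) / 3)) (at_right 0)"
    using assms by (intro tendsto_intros tendsto_mono[OF at_within_le_at FF_lim] NN_lim) auto
  moreover have "4 * (2 * real (k+1)) / (2 * real k * real (k+1) / 3) = 12 / real k"
    using assms by (simp add: divide_simps; simp add: algebra_simps)
  moreover have "eventually (\<lambda>t. 4 * (FF (k+1) t / t) / (NN k t / t^3) = 4 * t^2 * FF (k+1) t / NN k t) (at_right 0)"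
    by (auto simp: eventually_at_right_field field_simps power3_eq_cube power2_eq_square intro!: exI[of _ 1])
  ultimately show ?thesis by (simp add: tendsto_cong)
qed

lemma FF_EE:
  fixes t :: real
  assumes "t \<ge> 0"
  shows "(1+t)^m + (1-t)^m \<ge> 2 + real m * (real m - 1) * t^2 \<and>
         FF m t \<ge> 2 * real m * t + real m * (real m - 1) * (real m - 2) / 3 * t^3"
proof (induction m)
  case 0
  then show ?case by (simp add: FF_def)
next
  case (Suc m)
  have nn: "real m * (real m - 1) * (real m - 2) \<ge> 0"
  proof (cases "m \<ge> 2")
    case True
    then show ?thesis by (intro mult_nonneg_nonneg) auto
  next
    case False
    then have "m = 0 \<or> m = 1" by auto
    then show ?thesis by auto
  qed
  define E where "E = (1+t)^m + (1-t)^m"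
  define F where "F = FF m t"
  have e1: "(1+t)^Suc m + (1-t)^Suc m = E + t * F" unfolding E_def F_def FF_def by (simp add: algebra_simps)
  have f1: "FF (Suc m) t = F + t * E" unfolding E_def F_def FF_def by (simp add: algebra_simps)
  have IE: "E \<ge> 2 + real m * (real m - 1) * t^2" and IF: "F \<ge> 2 * real m * t + real m * (real m - 1) * (real m - 2) / 3 * t^3"
    using Suc unfolding E_def F_def by auto
  have "t * F \<ge> t * (2 * real m * t + real m * (real m - 1) * (real m - 2) / 3 * t^3)"
    using IF assms by (simp add: mult_left_mono)
  moreover have "t * (real m * (real m - 1) * (real m - 2) / 3 * t^3) \<ge> 0"
    using nn assms by simp
  moreover have "t * (2 * real m * t + real m * (real m - 1) * (real m - 2) / 3 * t^3) = 2*real m * t^2 + t*(real m * (real m - 1) * (real m - 2) / 3 * t^3)"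
    by (simp only: distrib_left) (simp add: power2_eq_square)
  ultimately have tF: "t * F \<ge> 2 * real m * t^2"
    by linarith
  have "real (Suc m) * (real (Suc m) - 1) * t^2 = real m * (real m - 1) * t^2 + 2 * real m * t^2"
    by (simp add: algebra_simps)
  then have A: "E + t * F \<ge> 2 + real (Suc m) * (real (Suc m) - 1) * t^2"
    using IE tF by linarith
  have "t * E \<ge> t * (2 + real m * (real m - 1) * t^2)"
    using IE assms by (simp add: mult_left_mono)
  moreover have "2 * real (Suc m) * t + real (Suc m) * (real (Suc m) - 1) * (real (Suc m) - 2) / 3 * t^3
     = (2 * real m * t + real m * (real m - 1) * (real m - 2) / 3 * t^3) + t * (2 + real m * (real m - 1) * t^2)"
    by (simp add: field_simps power2_eq_square power3_eq_cube)
  ultimately have B: "F + t * E \<ge> 2 * real (Suc m) * t + real (Suc m) * (real (Suc m) - 1) * (real (Suc m) - 2) / 3 * t^3"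
    using IF by linarith
  show ?case using A B e1 f1 by simp
qed

lemma FF_low:
  fixes t :: real
  assumes "t \<ge> 0" "m \<ge> 3"
  shows "FF m t \<ge> 2 * real m * t + 2 * t^3"
proof -
  have "real m * (real m - 1) * (real m - 2) \<ge> 3 * 2 * 1"
    using assms by (intro mult_mono) auto
  then have "real m * (real m - 1) * (real m - 2) / 3 * t^3 \<ge> 2 * t^3"
    using assms by (intro mult_right_mono) auto
  then show ?thesis using FF_EE[OF assms(1), of m] by linarith
qed

lemma pointwise:
  fixes x :: real
  assumes nk: "n > k" and k2: "k \<ge> 2" and x0: "0 < x" and x1: "x < 1"
    and eq: "P_poly n k x = Q_poly n k x"
  shows "C_const n k x = 4 * (x^(n-1)/2)^2 * FF (k+1) (x^(n-1)/2) / NN k (x^(n-1)/2)"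
    and "(x^(n-1))^(k-1) * (1 + (x^(n-1))^2 / (4 * real (k+1)))^(n-1) \<le> 1"
proof -
  define y where "y = x^(n-1)"
  define w where "w = x^(k-1)"
  define t where "t = y / 2"
  have y0: "y > 0" unfolding y_def using x0 by simp
  have w0: "w > 0" unfolding w_def using x0 by simp
  have hq: "x^(n-k) * w = y"
  proof -
    have "n - k + (k - 1) = n - 1" using nk k2 by simp
    then show ?thesis unfolding w_def y_def by (metis power_add)
  qed
  have hc: "x^(3*n-k-2) * w = y^3"
  proof -
    have "3*n-k-2 + (k - 1) = (n - 1) * 3" using nk k2 by simp
    then show ?thesis unfolding w_def y_def by (metis power_add power_mult)
  qed
  have a: "x^(n-k) = y / w" using hq w0 by (simp add: field_simps)
  have b: "x^(3*n-k-2) = y^3 / w" using hc w0 by (simp add: field_simps)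
  have F1: "FF (k+1) t = real (k+1) * (y / w)"
    using eq a unfolding P_poly_def Q_poly_def FF_def t_def y_def by simp
  have C: "C_const n k x = y^3 / w / (FF (k+2) t / real (k+2) - y / w)"
    unfolding C_const_def a b t_def FF_def y_def by simp
  have "4 * t^2 * FF (k+1) t / NN k t
      = (real (k+1) * (y^3 / w)) / (real (k+1) * (FF (k+2) t / real (k+2) - y / w))"
  proof -
    have N: "NN k t = real (k+1) * (FF (k+2) t / real (k+2) - y / w)"
      unfolding NN_def by (simp only: F1) (simp add: field_simps)
    have M: "4 * t^2 * FF (k+1) t = real (k+1) * (y^3 / w)"
      by (simp only: F1) (simp add: t_def field_simps power2_eq_square power3_eq_cube)
    show ?thesis by (simp only: N M)
  qed
  also have "\<dots> = y^3 / w / (FF (k+2) t / real (k+2) - y / w)"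
    by (rule mult_divide_mult_cancel_left) simp
  finally show "C_const n k x = 4 * (x^(n-1)/2)^2 * FF (k+1) (x^(n-1)/2) / NN k (x^(n-1)/2)"
    using C unfolding t_def y_def by simp
  have low: "FF (k+1) t \<ge> 2 * real (k+1) * t + 2 * t^3"
    using FF_low[of t "k+1"] y0 k2 unfolding t_def by simp
  have "w * FF (k+1) t = real (k+1) * y" using F1 w0 by (simp add: field_simps)
  moreover have "w * FF (k+1) t \<ge> w * (2 * real (k+1) * t + 2 * t^3)"
    using low w0 by (simp add: mult_left_mono)
  ultimately have "w * (real (k+1) * y + y^3 / 4) \<le> real (k+1) * y"
    unfolding t_def by (simp add: power3_eq_cube field_simps)
  moreover have "w * (real (k+1) * y + y^3 / 4) = (real (k+1) * y) * (w * (1 + y^2 / (4 * real (k+1))))"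
    by (simp add: field_simps power2_eq_square power3_eq_cube)
  ultimately have wl: "w * (1 + y^2 / (4 * real (k+1))) \<le> 1"
  proof -
    assume h1: "w * (real (k+1) * y + y^3 / 4) \<le> real (k+1) * y"
      and h2: "w * (real (k+1) * y + y^3 / 4) = (real (k+1) * y) * (w * (1 + y^2 / (4 * real (k+1))))"
    have p: "real (k+1) * y > 0" using y0 by simp
    from h1 h2 have "(real (k+1) * y) * (w * (1 + y^2 / (4 * real (k+1)))) \<le> (real (k+1) * y) * 1"
      by (simp only: mult_1_right)
    then show ?thesis using p by (simp only: mult_le_cancel_left_pos)
  qed
  have "(w * (1 + y^2 / (4 * real (k+1))))^(n-1) \<le> 1"
    using wl w0 y0 by (intro power_le_one) (auto intro!: mult_nonneg_nonneg)
  moreover have "w^(n-1) = y^(k-1)" unfolding w_def y_def by (simp add: power_mult[symmetric] mult.commute)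
  ultimately show "(x^(n-1))^(k-1) * (1 + (x^(n-1))^2 / (4 * real (k+1)))^(n-1) \<le> 1"
    unfolding y_def by (simp add: power_mult_distrib)
qed

theorem corollary5p7:
  fixes k :: nat and \<xi> :: "nat \<Rightarrow> real" and np :: "nat \<Rightarrow> nat"
  assumes hk: "k \<ge> 4"
    and hxi: "\<And>n. n > k \<Longrightarrow> 0 < \<xi> n \<and> \<xi> n < 1 \<and> P_poly n k (\<xi> n) = Q_poly n k (\<xi> n)"
    and hmono: "strict_mono np"
    and hgt: "\<And>p. np p > k"
    and hlim: "(\<lambda>p. ereal (\<xi> (np p) ^ (np p - 1)))
                 \<longlonglongrightarrow> limsup (\<lambda>n. ereal (\<xi> n ^ (n - 1)))"
  shows "\<exists>L. (\<lambda>p. C_const (np p) k (\<xi> (np p))) \<longlonglongrightarrow> L \<and> 0 < L \<and> L \<le> 3"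
proof -
  define y where "y p = \<xi> (np p) ^ (np p - 1)" for p
  define c where "c = 1 / (4 * real (k+1))"
  have c0: "c > 0" unfolding c_def by simp
  have ypos: "0 < y p" "y p < 1" for p
    using hxi[OF hgt[of p]] hgt[of p] hk unfolding y_def
    by (auto simp: power_less_one_iff)
  have Cy: "C_const (np p) k (\<xi> (np p)) = 4 * (y p/2)^2 * FF (k+1) (y p/2) / NN k (y p/2)" for p
    using pointwise(1)[OF hgt[of p] _ _ _ _] hxi[OF hgt[of p]] hk unfolding y_def by auto
  have bd: "(y p)^(k-1) * (1 + c * (y p)^2)^(np p - 1) \<le> 1" for p
    using pointwise(2)[OF hgt[of p] _ _ _ _] hxi[OF hgt[of p]] hk unfolding y_def c_def by auto
  have ylim: "y \<longlonglongrightarrow> 0"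
  proof (rule order_tendstoI)
    fix a :: real assume "a < 0"
    then show "eventually (\<lambda>p. a < y p) sequentially" using ypos by (auto intro: always_eventually less_trans)
  next
    fix a :: real assume a0: "0 < a"
    define \<delta> where "\<delta> = min a (1/2)"
    have d0: "0 < \<delta>" "\<delta> < 1" "\<delta> \<le> a" using a0 unfolding \<delta>_def by auto
    obtain N :: nat where N: "real N > 1 / (c * \<delta>^(k+1)) + 1" using reals_Archimedean2 by blast
    have "y p < a" if pN: "p \<ge> N" for p
    proof (rule ccontr)
      assume "\<not> y p < a"
      then have yd: "y p \<ge> \<delta>" using d0 by auto
      define n where "n = np p"
      have "n \<ge> p" unfolding n_def using seq_suble[OF hmono] by simp
      then have nN: "real (n - 1) > 1 / (c * \<delta>^(k+1))" using N pN hgt[of p] unfolding n_def by auto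
      have A: "\<delta>^(k-1) \<le> (y p)^(k-1)" using yd d0 by (intro power_mono) auto
      have "1 + c*\<delta>^2 \<le> 1 + c * (y p)^2" using yd d0 c0 by (auto intro!: mult_left_mono power_mono)
      then have B: "(1 + c*\<delta>^2)^(n-1) \<le> (1 + c * (y p)^2)^(n-1)" using c0 by (intro power_mono) auto
      have Be: "1 + real (n-1) * (c*\<delta>^2) \<le> (1 + c*\<delta>^2)^(n-1)"
        by (rule Bernoulli_inequality) (use c0 in \<open>smt (verit) mult_nonneg_nonneg zero_le_power2\<close>)
      have "\<delta>^(k-1) * (1 + real (n-1) * (c*\<delta>^2)) \<le> (y p)^(k-1) * (1 + c * (y p)^2)^(n-1)"
        using A B Be d0 c0 ypos(1)[of p] by (intro mult_mono order_trans[OF Be B]) auto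
      also have "\<dots> \<le> 1" using bd[of p] unfolding n_def .
      finally have E: "\<delta>^(k-1) * (1 + real (n-1) * (c*\<delta>^2)) \<le> 1" .
      have "\<delta>^(k+1) = \<delta>^(k-1) * \<delta>^2" using hk by (simp add: power_add[symmetric])
      then have "real (n-1) * (c * \<delta>^(k+1)) \<le> 1 - \<delta>^(k-1)"
        using E by (simp add: algebra_simps)
      also have "\<dots> < 1" using d0 by simp
      finally have "real (n-1) < 1 / (c * \<delta>^(k+1))"
        using c0 d0 by (simp add: field_simps)
      then show False using nN by simp
    qed
    then show "eventually (\<lambda>p. y p < a) sequentially"
      unfolding eventually_sequentially by blast
  qed
  have tlim: "filterlim (\<lambda>p. y p / 2) (at_right 0) sequentially"
  proof (rule tendsto_imp_filterlim_at_right)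
    show "(\<lambda>p. y p / 2) \<longlonglongrightarrow> 0" using tendsto_divide[OF ylim tendsto_const, of 2] by simp
    show "eventually (\<lambda>p. y p / 2 > 0) sequentially" using ypos by (auto intro: always_eventually)
  qed
  have "(\<lambda>p. 4 * (y p/2)^2 * FF (k+1) (y p/2) / NN k (y p/2)) \<longlonglongrightarrow> 12 / real k"
    using filterlim_compose[OF G_lim tlim] hk by simp
  then have "(\<lambda>p. C_const (np p) k (\<xi> (np p))) \<longlonglongrightarrow> 12 / real k"
    by (simp add: Cy)
  moreover have "0 < 12 / real k" "12 / real k \<le> 3" using hk by (auto simp: field_simps)
  ultimately show ?thesis by blast
qed

end
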